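(* For any positive integer $n$, as formal power series in $z$, \[ \begin{aligned} \frac{ (-tzq;q)_{n} }{ (zq;q)_{n} } &= 1+ \sum_{m=1}^{n-1} \left( \overline{ {n+m-1 \brack 2m } }_{q,t} + t\, \overline{ {n+m-2 \brack 2m-1 } }_{q,t} \right) z^{2m} q^{2m^2+2m} \frac{ (-tzq;q)_{m} }{(zq;q)_{m}} \\ &\quad+\sum_{m=1}^{n} \overline{ {n+m-1 \brack 2m-1 } }_{q,t} z^{2m-1} q^{2m^2 - m} \frac{ (-tzq;q)_{m} }{(zq;q)_{m}} \\&\quad + \sum_{m=1}^{n} \overline{ {n+m-2 \brack 2m-2 } }_{q,t}\, t z^{2m-1} q^{2m^2-m} \frac{ (-tzq;q)_{m-1} }{(zq;q)_{m-1}} . \end{aligned} \]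
   Context: An overpartition is a partition in which the last occurrence of each distinct part size may be overlined; its weight $|\lambda|$ is the sum of its parts. For integers $0\le b\le a$, $\overline{{a \brack b}}_{q,t}=\sum_{\lambda} t^{\#_o(\lambda)} q^{|\lambda|}$, the sum over all overpartitions $\lambda$ with largest part at most $a-b$ and at most $b$ parts, $\#_o(\lambda)$ being the number of overlined parts; for other integer pairs $(a,b)$ it is $0$. $(x;q)_k=\prod_{j=1}^k(1-xq^{j-1})$, $(x;q)_0=1$. *)

theory Defs
  imports Main "HOL-Library.Multiset" "HOL-Computational_Algebra.Formal_Power_Series"
begin

definition qpoch :: "'a::comm_ring_1 \<Rightarrow> 'a \<Rightarrow> nat \<Rightarrow> 'a" where
  "qpoch x q k = (\<Prod>j<k. (1 - x * q ^ j))"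

text \<open>An overpartition is a finite multiset of positive parts together with the set O of
  part sizes whose last occurrence is overlined (O must be a subset of the occurring sizes).\<close>
definition overparts :: "nat \<Rightarrow> nat \<Rightarrow> (nat multiset \<times> nat set) set" where
  "overparts L N = {(lam, ov). 0 \<notin># lam \<and> (\<forall>x\<in>#lam. x \<le> L) \<and> size lam \<le> N
                               \<and> ov \<subseteq> set_mset lam}"

definition ovbin :: "'a::comm_ring_1 \<Rightarrow> 'a \<Rightarrow> int \<Rightarrow> int \<Rightarrow> 'a" where
  "ovbin q t a b = (if 0 \<le> b \<and> b \<le> a then
      (\<Sum>(lam, ov)\<in>overparts (nat (a - b)) (nat b). t ^ card ov * q ^ sum_mset lam)
    else 0)"

end

theory Submission
  imports Defs "HOL-Computational_Algebra.Formal_Power_Series"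
begin

definition obs :: "'a::comm_ring_1 \<Rightarrow> 'a \<Rightarrow> nat \<Rightarrow> nat \<Rightarrow> 'a" where
  "obs q t L N = (\<Sum>(lam, ov)\<in>overparts L N. t ^ card ov * q ^ sum_mset lam)"

lemma finite_overparts: "finite (overparts L N)"
proof -
  have "overparts L N \<subseteq> (mset ` {xs. set xs \<subseteq> {0..L} \<and> length xs \<le> N}) \<times> Pow {0..L}"
  proof
    fix p assume p: "p \<in> overparts L N"
    obtain lam ov where pe: "p = (lam, ov)" by fastforce
    obtain xs where xs: "mset xs = lam" using ex_mset by blast
    have "lam \<in> mset ` {xs. set xs \<subseteq> {0..L} \<and> length xs \<le> N}"
      using p pe xs by (auto simp: overparts_def intro!: image_eqI[of _ _ xs])
    moreover have "ov \<subseteq> {0..L}" using p pe by (auto simp: overparts_def)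
    ultimately show "p \<in> (mset ` {xs. set xs \<subseteq> {0..L} \<and> length xs \<le> N}) \<times> Pow {0..L}"
      using pe by auto
  qed
  moreover have "finite ((mset ` {xs. set xs \<subseteq> {0..L} \<and> length xs \<le> N}) \<times> Pow {0..L})"
    by (intro finite_cartesian_product finite_imageI finite_lists_length_le) auto
  ultimately show ?thesis by (rule finite_subset)
qed

lemma overparts_0L: "overparts 0 N = {({#}, {})}"
proof -
  have "lam = {#}" if "0 \<notin># lam" "\<forall>x\<in>#lam. x \<le> 0" for lam :: "nat multiset"
    using that by (metis le_zero_eq multiset_nonemptyE)
  then show ?thesis by (auto simp: overparts_def)
qed

lemma overparts_L0: "overparts L 0 = {({#}, {})}"
  by (auto simp: overparts_def)

lemma obs_0L: "obs q t 0 N = 1"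
  by (simp add: obs_def overparts_0L)

lemma obs_L0: "obs q t L 0 = 1"
  by (simp add: obs_def overparts_L0)

lemma notin_bound: "\<forall>x\<in>#a. x \<le> L - Suc 0 \<Longrightarrow> Suc 0 \<le> L \<Longrightarrow> L \<in># a \<Longrightarrow> False"
  by fastforce

lemma overparts_split:
  assumes "L \<ge> 1" "N \<ge> 1"
  shows "overparts L N = overparts (L-1) N
     \<union> (\<lambda>(mu, v). (mu + {#L#}, v)) ` overparts L (N-1)
     \<union> (\<lambda>(mu, v). (mu + {#L#}, insert L v)) ` overparts (L-1) (N-1)"
proof (intro equalityI subsetI)
  fix p assume p: "p \<in> overparts L N"
  obtain lam ov where pe: "p = (lam, ov)" by fastforce
  have h: "0 \<notin># lam" "\<forall>x\<in>#lam. x \<le> L" "size lam \<le> N" "ov \<subseteq> set_mset lam"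
    using p pe by (auto simp: overparts_def)
  show "p \<in> overparts (L-1) N
     \<union> (\<lambda>(mu, v). (mu + {#L#}, v)) ` overparts L (N-1)
     \<union> (\<lambda>(mu, v). (mu + {#L#}, insert L v)) ` overparts (L-1) (N-1)"
  proof (cases "L \<in># lam")
    case False
    then have "\<forall>x\<in>#lam. x \<le> L - 1" using h(2) by (metis Suc_pred' assms(1) le_SucE less_Suc_eq_le less_one not_le)
    then have "p \<in> overparts (L-1) N" using h pe by (auto simp: overparts_def)
    then show ?thesis by blast
  next
    case True
    define mu where "mu = lam - {#L#}"
    have lam: "lam = mu + {#L#}" using True by (simp add: mu_def)
    have szmu: "size mu \<le> N - 1" using h(3) lam by simp
    show ?thesis
    proof (cases "L \<in> ov \<and> L \<notin># mu")
      case True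
      have "\<forall>x\<in>#mu. x \<le> L - 1"
        using h(2) lam True by (metis add_mset_add_single le_SucE le_imp_less_Suc less_imp_le_nat Suc_pred' assms(1) union_iff less_one not_le)
      moreover have "ov - {L} \<subseteq> set_mset mu" using h(4) lam by auto
      ultimately have "(mu, ov - {L}) \<in> overparts (L-1) (N-1)"
        using h lam szmu by (auto simp: overparts_def)
      moreover have "p = (\<lambda>(mu, v). (mu + {#L#}, insert L v)) (mu, ov - {L})" using pe lam True by auto
      ultimately have "p \<in> (\<lambda>(mu, v). (mu + {#L#}, insert L v)) ` overparts (L-1) (N-1)"
        by (rule rev_image_eqI)
      then show ?thesis by blast
    next
      case False
      have "ov \<subseteq> set_mset mu" using h(4) lam False by auto
      then have "(mu, ov) \<in> overparts L (N-1)"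
        using h lam szmu by (auto simp: overparts_def)
      moreover have "p = (\<lambda>(mu, v). (mu + {#L#}, v)) (mu, ov)" using pe lam by auto
      ultimately have "p \<in> (\<lambda>(mu, v). (mu + {#L#}, v)) ` overparts L (N-1)"
        by (rule rev_image_eqI)
      then show ?thesis by blast
    qed
  qed
next
  fix p assume "p \<in> overparts (L-1) N
     \<union> (\<lambda>(mu, v). (mu + {#L#}, v)) ` overparts L (N-1)
     \<union> (\<lambda>(mu, v). (mu + {#L#}, insert L v)) ` overparts (L-1) (N-1)"
  then show "p \<in> overparts L N" using assms
    by (auto simp: overparts_def) (meson diff_le_self le_trans)+
qed

lemma obs_rec:
  fixes q t :: "'a::comm_ring_1"
  assumes "L \<ge> 1" "N \<ge> 1"
  shows "obs q t L N = obs q t (L-1) N + q ^ L * (obs q t L (N-1) + t * obs q t (L-1) (N-1))"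
proof -
  let ?w = "\<lambda>(lam::nat multiset, ov::nat set). t ^ card ov * q ^ sum_mset lam"
  let ?f1 = "\<lambda>(mu::nat multiset, v::nat set). (mu + {#L#}, v)"
  let ?f2 = "\<lambda>(mu::nat multiset, v::nat set). (mu + {#L#}, insert L v)"
  have inj1: "inj_on ?f1 (overparts L (N-1))" by (auto simp: inj_on_def)
  have inj2: "inj_on ?f2 (overparts (L-1) (N-1))"
  proof (rule inj_onI)
    fix x y assume x: "x \<in> overparts (L-1) (N-1)" and y: "y \<in> overparts (L-1) (N-1)" and e: "?f2 x = ?f2 y"
    obtain a b where xe: "x = (a,b)" by fastforce
    obtain c d where ye: "y = (c,d)" by fastforce
    have nb: "L \<notin> b" if "(a,b) \<in> overparts (L-1) (N-1)" for a b
    proof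
      assume Lb: "L \<in> b"
      have "\<forall>x\<in>#a. x \<le> L - 1" "b \<subseteq> set_mset a" using that by (auto simp: overparts_def)
      then have "L \<le> L - 1" using Lb by blast
      then show False using assms by simp
    qed
    have "L \<notin> b" "L \<notin> d" using nb x y xe ye by auto
    then show "x = y" using e xe ye by (auto simp: insert_ident)
  qed
  have d1: "overparts (L-1) N \<inter> ?f1 ` overparts L (N-1) = {}"
    using assms by (auto simp: overparts_def dest: notin_bound)
  have d2: "(overparts (L-1) N \<union> ?f1 ` overparts L (N-1)) \<inter> ?f2 ` overparts (L-1) (N-1) = {}"
    using assms by (auto simp: overparts_def dest: notin_bound)
  have w1: "sum ?w (?f1 ` overparts L (N-1)) = q^L * obs q t L (N-1)"
    unfolding sum.reindex[OF inj1] obs_def sum_distrib_left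
    by (rule sum.cong) (auto simp: algebra_simps power_add)
  have w2: "sum ?w (?f2 ` overparts (L-1) (N-1)) = q^L * (t * obs q t (L-1) (N-1))"
    unfolding sum.reindex[OF inj2] obs_def sum_distrib_left
  proof (rule sum.cong)
    fix x assume x: "x \<in> overparts (L-1) (N-1)"
    obtain a b where xe: "x = (a,b)" by fastforce
    have "L \<notin> b"
    proof
      assume Lb: "L \<in> b"
      have "\<forall>x\<in>#a. x \<le> L - 1" "b \<subseteq> set_mset a" using x xe by (auto simp: overparts_def)
      then have "L \<le> L - 1" using Lb by blast
      then show False using assms by simp
    qed
    have "finite b" using x xe by (auto simp: overparts_def intro: finite_subset)
    then show "(?w \<circ> ?f2) x = q ^ L * (t * ?w x)" using xe \<open>L \<notin> b\<close> by (simp add: algebra_simps power_add)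
  qed simp
  have fA: "finite (overparts (L-1) N)" "finite (?f1 ` overparts L (N-1))" "finite (?f2 ` overparts (L-1) (N-1))"
    by (simp_all add: finite_overparts)
  have "obs q t L N = sum ?w (overparts (L-1) N \<union> ?f1 ` overparts L (N-1) \<union> ?f2 ` overparts (L-1) (N-1))"
    by (simp only: obs_def overparts_split[OF assms])
  also have "\<dots> = sum ?w (overparts (L-1) N \<union> ?f1 ` overparts L (N-1)) + sum ?w (?f2 ` overparts (L-1) (N-1))"
    by (rule sum.union_disjoint) (use fA d2 in auto)
  also have "sum ?w (overparts (L-1) N \<union> ?f1 ` overparts L (N-1)) = sum ?w (overparts (L-1) N) + sum ?w (?f1 ` overparts L (N-1))"
    by (rule sum.union_disjoint) (use fA d1 in auto)
  finally have "obs q t L N = sum ?w (overparts (L-1) N) + sum ?w (?f1 ` overparts L (N-1)) + sum ?w (?f2 ` overparts (L-1) (N-1))" .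
  also have "\<dots> = obs q t (L-1) N + q ^ L * (obs q t L (N-1) + t * obs q t (L-1) (N-1))"
    unfolding w1 w2 by (simp add: obs_def algebra_simps)
  finally show ?thesis .
qed

lemma ovbin_obs: "0 \<le> b \<Longrightarrow> b \<le> a \<Longrightarrow> ovbin q t a b = obs q t (nat (a - b)) (nat b)"
  by (simp add: ovbin_def obs_def)

lemma ovbin_out: "b < 0 \<or> a < b \<Longrightarrow> ovbin q t a b = 0"
  by (auto simp: ovbin_def)

lemma ovbin_0: "0 \<le> a \<Longrightarrow> ovbin q t a 0 = 1"
  by (simp add: ovbin_obs obs_L0)

lemma ovbin_diag: "0 \<le> a \<Longrightarrow> ovbin q t a a = 1"
  by (simp add: ovbin_obs obs_0L)

lemma arec:
  fixes q t :: "'a::comm_ring_1"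
  assumes "0 \<le> b" "b \<le> a" "1 \<le> a"
  shows "ovbin q t a b = ovbin q t (a-1) b + q ^ nat (a - b) * (ovbin q t (a-1) (b-1) + t * ovbin q t (a-2) (b-1))"
proof -
  consider "b = 0" | "b = a" | "0 < b \<and> b < a" using assms by linarith
  then show ?thesis
  proof cases
    case 1 then show ?thesis using assms by (simp add: ovbin_0 ovbin_out)
  next
    case 2 then show ?thesis using assms by (simp add: ovbin_diag ovbin_out)
  next
    case 3
    define L where "L = nat (a - b)"
    define N where "N = nat b"
    have LN: "L \<ge> 1" "N \<ge> 1" using 3 by (auto simp: L_def N_def)
    have e1: "ovbin q t a b = obs q t L N" using 3 by (simp add: ovbin_obs L_def N_def)
    have e2: "ovbin q t (a-1) b = obs q t (L-1) N" using 3 by (simp add: ovbin_obs L_def N_def nat_diff_distrib)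
    have e3: "ovbin q t (a-1) (b-1) = obs q t L (N-1)" using 3 by (simp add: ovbin_obs L_def N_def nat_diff_distrib)
    have e4: "ovbin q t (a-2) (b-1) = obs q t (L-1) (N-1)" using 3 by (simp add: ovbin_obs L_def N_def nat_diff_distrib)
    show ?thesis unfolding e1 e2 e3 e4 using obs_rec[OF LN, of q t] by (simp add: L_def)
  qed
qed

lemma bgen:
  fixes pab p1b p1b1 p2b1 p2b2 p3b2 p2b p3b1 p4b2 q u v t :: "'b::comm_ring_1"
  assumes H1: "pab - p1b = q*u*(p1b1 + t*p2b1)"
  and H2: "p1b1 - p2b1 = q*u*(p2b2 + t*p3b2)"
  and H3: "p1b - p2b = u*(p2b1 + t*p3b1)"
  and H4: "p2b1 - p3b1 = u*(p3b2 + t*p4b2)"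
  and I1: "p1b - p2b1 - q*v*(p2b + t*p3b1) = 0"
  and I2: "p1b1 - p2b2 - v*(p2b1 + t*p3b2) = 0"
  and I3: "p2b1 - p3b2 - v*(p3b1 + t*p4b2) = 0"
  shows "pab - p1b1 - q*v*(p1b + t*p2b1) = 0"
proof -
  have "pab - p1b1 - q*v*(p1b + t*p2b1) = (pab - p1b) - (p1b1 - p2b1) - q*v*((p1b - p2b) + t*(p2b1 - p3b1))
     + (p1b - p2b1 - q*v*(p2b + t*p3b1))"
    by (simp add: algebra_simps)
  also have "\<dots> = q*u*(p1b1 + t*p2b1) - q*u*(p2b2 + t*p3b2) - q*v*(u*(p2b1 + t*p3b1) + t*(u*(p3b2 + t*p4b2)))"
    unfolding H1 H2 H3 H4 I1 by simp
  also have "\<dots> = q*u*((p1b1 - p2b2 - v*(p2b1 + t*p3b2)) + t*(p2b1 - p3b2 - v*(p3b1 + t*p4b2)))"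
    by (simp add: algebra_simps)
  also have "\<dots> = 0" unfolding I2 I3 by simp
  finally show ?thesis .
qed

lemma brec0:
  fixes q t :: "'a::comm_ring_1"
  shows "int k = a \<Longrightarrow> 1 \<le> a \<Longrightarrow> 0 \<le> b \<Longrightarrow>
    ovbin q t a b - ovbin q t (a-1) (b-1) - q ^ nat b * (ovbin q t (a-1) b + t * ovbin q t (a-2) (b-1)) = 0"
proof (induction k arbitrary: a b rule: less_induct)
  case (less k)
  let ?P = "ovbin q t"
  consider "b = 0" | "b \<ge> a" | "a = 2 \<and> b = 1" | "a \<ge> 3 \<and> 1 \<le> b \<and> b < a" using less.prems by linarith
  then show ?case
  proof cases
    case 1 then show ?thesis using less.prems by (simp add: ovbin_0 ovbin_out)
  next
    case 2
    show ?thesis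
    proof (cases "b = a")
      case True then show ?thesis using less.prems
        by (simp add: ovbin_diag ovbin_out)
    next
      case False then show ?thesis using 2 less.prems
        by (simp add: ovbin_out)
    qed
  next
    case 3
    have "?P 2 1 = ?P 1 1 + q ^ nat (2 - 1) * (?P 1 0 + t * ?P 0 0)"
      using arec[of 1 2 q t] by simp
    then show ?thesis using 3 by (simp add: ovbin_diag ovbin_0 ovbin_out algebra_simps)
  next
    case 4
    define u where "u = q ^ nat (a - b - 1)"
    define v where "v = q ^ nat (b - 1)"
    have ab1: "nat (a - b) = Suc (nat (a - b - 1))" using 4 by (subst Suc_nat_eq_nat_zadd1) auto
    have bb1: "nat b = Suc (nat (b - 1))" using 4 by (subst Suc_nat_eq_nat_zadd1) auto
    have qu: "q ^ nat (a - b) = q * u" unfolding u_def ab1 by simp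
    have qv: "q ^ nat b = q * v" unfolding v_def bb1 by simp
    have e1: "a - 1 - 1 = a - 2" "a - 1 - 2 = a - 3" "b - 1 - 1 = b - 2" "a - 2 - 1 = a - 3" "a - 2 - 2 = a - 4"
      "a - 1 - (b - 1) = a - b" "a - 1 - b = a - b - 1" "a - 2 - (b - 1) = a - b - 1" by simp_all
    have H1: "?P a b - ?P (a-1) b = q*u*(?P (a-1) (b-1) + t*?P (a-2) (b-1))"
      using arec[of b a q t] 4 unfolding qu by simp
    have H2: "?P (a-1) (b-1) - ?P (a-2) (b-1) = q*u*(?P (a-2) (b-2) + t*?P (a-3) (b-2))"
      using arec[of "b-1" "a-1" q t] 4 unfolding e1 qu by simp
    have H3: "?P (a-1) b - ?P (a-2) b = u*(?P (a-2) (b-1) + t*?P (a-3) (b-1))"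
      using arec[of "b" "a-1" q t] 4 unfolding e1 u_def by simp
    have H4: "?P (a-2) (b-1) - ?P (a-3) (b-1) = u*(?P (a-3) (b-2) + t*?P (a-4) (b-2))"
      using arec[of "b-1" "a-2" q t] 4 unfolding e1 u_def by simp
    have k1: "nat (a - 1) < k" "int (nat (a-1)) = a - 1" "nat (a - 2) < k" "int (nat (a-2)) = a - 2"
      using 4 less.prems by auto
    have I1: "?P (a-1) b - ?P (a-2) (b-1) - q*v*(?P (a-2) b + t*?P (a-3) (b-1)) = 0"
      using less.IH[OF k1(1,2), of b] 4 qv unfolding e1 by simp
    have I2: "?P (a-1) (b-1) - ?P (a-2) (b-2) - v*(?P (a-2) (b-1) + t*?P (a-3) (b-2)) = 0"
      using less.IH[OF k1(1,2), of "b-1"] 4 unfolding e1 v_def by simp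
    have I3: "?P (a-2) (b-1) - ?P (a-3) (b-2) - v*(?P (a-3) (b-1) + t*?P (a-4) (b-2)) = 0"
      using less.IH[OF k1(3,4), of "b-1"] 4 unfolding e1 v_def by simp
    have "?P a b - ?P (a-1) (b-1) - q*v*(?P (a-1) b + t*?P (a-2) (b-1)) = 0"
      by (rule bgen[OF H1 H2 H3 H4 I1 I2 I3])
    then show ?thesis unfolding qv .
  qed
qed

lemma qpoch_Suc: "qpoch x q (Suc k) = qpoch x q k * (1 - x * q ^ k)"
  by (simp add: qpoch_def)

lemma qpoch_0: "qpoch x q 0 = 1"
  by (simp add: qpoch_def)

lemma den_nth0: "fps_nth (qpoch (fps_const (q::'a::field) * fps_X) (fps_const q) k) 0 = 1"
  by (induction k) (simp_all add: qpoch_0 qpoch_Suc)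

lemma R_step:
  fixes q t :: "'a::field"
  defines "R \<equiv> (\<lambda>k::nat. qpoch (- fps_const (t * q) * fps_X) (fps_const q) k
                         / qpoch (fps_const q * fps_X) (fps_const q) k)"
  shows "(1 - fps_const (q ^ Suc j) * fps_X) * R (Suc j) = (1 + fps_const (t * q ^ Suc j) * fps_X) * R j"
proof -
  let ?N = "qpoch (- fps_const (t * q) * fps_X) (fps_const q) j"
  let ?D = "qpoch (fps_const q * fps_X) (fps_const q) j"
  let ?e = "1 - fps_const (q ^ Suc j) * fps_X :: 'a fps"
  let ?e' = "1 + fps_const (t * q ^ Suc j) * fps_X :: 'a fps"
  have N1: "- fps_const (t * q) * fps_X * fps_const q ^ j = - (fps_const (t * q ^ Suc j) * (fps_X :: 'a fps))"
    by (simp add: fps_const_power fps_const_mult[symmetric] algebra_simps del: fps_const_mult)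
  have N: "qpoch (- fps_const (t * q) * fps_X) (fps_const q) (Suc j) = ?N * ?e'"
    using N1 by (simp add: qpoch_Suc)
  have D1: "fps_const q * fps_X * fps_const q ^ j = fps_const (q ^ Suc j) * (fps_X :: 'a fps)"
    by (simp add: fps_const_power fps_const_mult[symmetric] algebra_simps del: fps_const_mult)
  have D: "qpoch (fps_const q * fps_X) (fps_const q) (Suc j) = ?D * ?e"
    using D1 by (simp add: qpoch_Suc)
  have D0: "fps_nth ?D 0 \<noteq> 0" by (simp add: den_nth0)
  have e0: "fps_nth ?e 0 \<noteq> 0" by simp
  have "R (Suc j) = ?N * ?e' * inverse (?D * ?e)"
    unfolding R_def N D using D0 e0 by (simp add: fps_divide_unit)
  also have "\<dots> = ?N * ?e' * inverse ?D * inverse ?e" by (simp add: fps_inverse_mult)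
  finally have "?e * R (Suc j) = ?N * ?e' * inverse ?D * (?e * inverse ?e)" by (simp add: algebra_simps)
  also have "\<dots> = ?N * ?e' * inverse ?D" using inverse_mult_eq_1'[OF e0] by simp
  also have "\<dots> = ?e' * R j" unfolding R_def using D0 by (simp add: fps_divide_unit algebra_simps)
  finally show ?thesis .
qed

lemma R_zero:
  fixes q t :: "'a::field"
  shows "qpoch (- fps_const (t * q) * fps_X) (fps_const q) 0 / qpoch (fps_const q * fps_X) (fps_const q) 0 = 1"
  by (simp add: qpoch_0)
lemma gen1:
  fixes X y r s ct cM cD cE cG cq cD1 g g' b b' a1 a1' a2' h :: "'b::comm_ring_1"
  assumes rel: "(1 - cM*X)*s = (1 + ct*cM*X)*r"
  and Gq: "cG*cq = cM^2"
  and R1: "b - b' = cD*(g + ct*g')"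
  and R2: "b - g = cG*(b' + ct*g')"
  and R3: "b' - g' = cG*(a2' + ct*h)"
  and DD: "cD = cq*cD1"
  and R4: "a1 - a1' = cD1*(b' + ct*a2')"
  and R5: "b' - a2' = cD1*(g' + ct*h)"
  shows "(1 - cM*cD*X) * ((a1 + ct*b')*(y*X)*(cE*cM^4)*s + b*y*(cE*cM)*s + (g*ct)*y*(cE*cM)*r)
 - (1 + ct*cM*cD*X) * ((a1' + ct*a2')*(y*X)*(cE*cM^4)*s + b'*y*(cE*cM)*s + (g'*ct)*y*(cE*cM)*r)
 = (ct*cE*cM*(g - g') + cE*cM*cD*(g + ct*g'))*y*r - (ct*cE*cM^5*cq*(a1 - a1') + cE*cM^5*cD*(a1+ct*a1'))*(y*X*X)*s"
proof -
  define E where "E = y*cE*cM*cD*(g + ct*g')"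
  define k0 where "k0 = (b - b') - cD*(g + ct*g')"
  define k1 where "k1 = cM^3*(a1 - a1') + ct*cM^3*(b' - a2') - cM*cD*((b - g) + ct*(b' - g'))"
  define k2 where "k2 = ct*cM^4*(cq*(a1-a1') - cD*(b' + ct*a2'))"
  have k0: "k0 = 0" using R1 by (simp add: k0_def)
  have k1: "k1 = 0"
  proof -
    have "k1 = cM^3*(cD1*(b' + ct*a2')) + ct*cM^3*(cD1*(g' + ct*h)) - cM*(cq*cD1)*((cG*(b' + ct*g')) + ct*(cG*(a2' + ct*h)))"
      unfolding k1_def R2 R3 R4 R5 DD ..
    also have "\<dots> = cM*cD1*(cM^2 - cG*cq)*(b' + ct*a2' + ct*g' + ct*ct*h)"
      by (simp add: algebra_simps power2_eq_square power3_eq_cube)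
    finally show ?thesis using Gq by simp
  qed
  have k2: "k2 = 0" unfolding k2_def R4 DD by (simp add: algebra_simps)
  have A: "(1 - cM*cD*X) * ((a1 + ct*b')*(y*X)*(cE*cM^4) + b*y*(cE*cM))
      - (1 + ct*cM*cD*X) * ((a1' + ct*a2')*(y*X)*(cE*cM^4) + b'*y*(cE*cM))
      + (ct*cE*cM^5*cq*(a1 - a1') + cE*cM^5*cD*(a1+ct*a1'))*(y*X*X) - E*(1 - cM*X)
      = y*cE*cM*(k0 + k1*X + k2*X*X)"
    unfolding E_def k0_def k1_def k2_def
    by (simp add: algebra_simps power2_eq_square power3_eq_cube eval_nat_numeral)
  have B: "(ct*cE*cM*(g - g') + cE*cM*cD*(g + ct*g'))*y - ((1 - cM*cD*X)*(g*ct)*y*(cE*cM) - (1 + ct*cM*cD*X)*(g'*ct)*y*(cE*cM))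
      = E*(1 + ct*cM*X)"
    unfolding E_def by (simp add: algebra_simps)
  have A': "(1 - cM*cD*X) * ((a1 + ct*b')*(y*X)*(cE*cM^4) + b*y*(cE*cM))
      - (1 + ct*cM*cD*X) * ((a1' + ct*a2')*(y*X)*(cE*cM^4) + b'*y*(cE*cM))
      + (ct*cE*cM^5*cq*(a1 - a1') + cE*cM^5*cD*(a1+ct*a1'))*(y*X*X) = E*(1 - cM*X)"
    using A k0 k1 k2 by (simp add: algebra_simps)
  let ?L = "(1 - cM*cD*X) * ((a1 + ct*b')*(y*X)*(cE*cM^4) + b*y*(cE*cM))
      - (1 + ct*cM*cD*X) * ((a1' + ct*a2')*(y*X)*(cE*cM^4) + b'*y*(cE*cM))
      + (ct*cE*cM^5*cq*(a1 - a1') + cE*cM^5*cD*(a1+ct*a1'))*(y*X*X)"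
  let ?M = "(ct*cE*cM*(g - g') + cE*cM*cD*(g + ct*g'))*y - ((1 - cM*cD*X)*(g*ct)*y*(cE*cM) - (1 + ct*cM*cD*X)*(g'*ct)*y*(cE*cM))"
  have "?L * s - ?M * r = E*((1 - cM*X)*s) - E*((1 + ct*cM*X)*r)"
    unfolding A' B by (simp add: algebra_simps)
  also have "\<dots> = 0" using rel by simp
  finally have Z: "?L * s - ?M * r = 0" .
  show ?thesis
    apply (rule iffD2[OF eq_iff_diff_eq_0])
    apply (rule trans[OF _ Z])
    by (simp add: algebra_simps)
qed

lemma gen1':
  fixes X y r s ct cM cD cE cG cq cD1 g g' b b' a1 a1' a2' h f1 f2 f3 f1' f2' f3' v1 v2 Qn Tn :: "'b::comm_ring_1"
  assumes rel: "(1 - cM*X)*s = (1 + ct*cM*X)*r"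
  and Gq: "cG*cq = cM^2"
  and R1: "b - b' = cD*(g + ct*g')"
  and R2: "b - g = cG*(b' + ct*g')"
  and R3: "b' - g' = cG*(a2' + ct*h)"
  and DD: "cD = cq*cD1"
  and R4: "a1 - a1' = cD1*(b' + ct*a2')"
  and R5: "b' - a2' = cD1*(g' + ct*h)"
  and F1: "f1 = (a1 + ct*b')*(y*X)*(cE*cM^4)*s"
  and F2: "f2 = b*y*(cE*cM)*s"
  and F3: "f3 = (g*ct)*y*(cE*cM)*r"
  and F1': "f1' = (a1' + ct*a2')*(y*X)*(cE*cM^4)*s"
  and F2': "f2' = b'*y*(cE*cM)*s"
  and F3': "f3' = (g'*ct)*y*(cE*cM)*r"
  and Qn: "Qn = cM*cD" and Tn: "Tn = ct*cM*cD"
  and V1: "v1 = (ct*cE*cM*(g - g') + cE*cM*cD*(g + ct*g'))*y*r"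
  and V2: "v2 = (ct*cE*cM^5*cq*(a1 - a1') + cE*cM^5*cD*(a1+ct*a1'))*(y*X*X)*s"
  shows "(1 - Qn*X) * (f1 + f2 + f3) - (1 + Tn*X) * (f1' + f2' + f3') = v1 - v2"
  unfolding F1 F2 F3 F1' F2' F3' Qn Tn V1 V2
  using gen1[OF rel Gq R1 R2 R3 DD R4 R5, where y=y and cE=cE] by (simp add: add.assoc)

lemma gen0':
  fixes X y r s ct cM cD cE cq g g' b b' a1 a1' a2' f1 f2 f3 f1' f2' f3' v1 v2 Qn Tn :: "'b::comm_ring_1"
  assumes rel: "(1 - cM*X)*s = (1 + ct*cM*X)*r"
  and Z: "a1 = 0" "a1' = 0" "b' = 0" "a2' = 0" "g' = 0" "b = 1" "g = 1" "cD = 1"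
  and F1: "f1 = (a1 + ct*b')*(y*X)*(cE*cM^4)*s"
  and F2: "f2 = b*y*(cE*cM)*s"
  and F3: "f3 = (g*ct)*y*(cE*cM)*r"
  and F1': "f1' = (a1' + ct*a2')*(y*X)*(cE*cM^4)*s"
  and F2': "f2' = b'*y*(cE*cM)*s"
  and F3': "f3' = (g'*ct)*y*(cE*cM)*r"
  and Qn: "Qn = cM*cD" and Tn: "Tn = ct*cM*cD"
  and V1: "v1 = (ct*cE*cM*(g - g') + cE*cM*cD*(g + ct*g'))*y*r"
  and V2: "v2 = (ct*cE*cM^5*cq*(a1 - a1') + cE*cM^5*cD*(a1+ct*a1'))*(y*X*X)*s"
  shows "(1 - Qn*X) * (f1 + f2 + f3) - (1 + Tn*X) * (f1' + f2' + f3') = v1 - v2"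
proof -
  have "(1 - Qn*X) * (f1 + f2 + f3) - (1 + Tn*X) * (f1' + f2' + f3') = cE*cM*y*(((1 - cM*X)*s) + ct*(1 - cM*X)*r)"
    unfolding F1 F2 F3 F1' F2' F3' Qn Tn Z by (simp add: algebra_simps)
  also have "\<dots> = cE*cM*y*((1 + ct*cM*X)*r + ct*(1 - cM*X)*r)" unfolding rel ..
  also have "\<dots> = v1 - v2" unfolding V1 V2 Z by (simp add: algebra_simps)
  finally show ?thesis .
qed

definition F1 :: "'a::field \<Rightarrow> 'a \<Rightarrow> (nat \<Rightarrow> 'a fps) \<Rightarrow> nat \<Rightarrow> nat \<Rightarrow> 'a fps" where
  "F1 q t R n m = fps_const (ovbin q t (int n + int m - 1) (2 * int m)
                     + t * ovbin q t (int n + int m - 2) (2 * int m - 1))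
          * fps_X ^ (2 * m) * fps_const (q ^ (2 * m\<^sup>2 + 2 * m)) * R m"
definition F2 :: "'a::field \<Rightarrow> 'a \<Rightarrow> (nat \<Rightarrow> 'a fps) \<Rightarrow> nat \<Rightarrow> nat \<Rightarrow> 'a fps" where
  "F2 q t R n m = fps_const (ovbin q t (int n + int m - 1) (2 * int m - 1))
          * fps_X ^ (2 * m - 1) * fps_const (q ^ (2 * m\<^sup>2 - m)) * R m"
definition F3 :: "'a::field \<Rightarrow> 'a \<Rightarrow> (nat \<Rightarrow> 'a fps) \<Rightarrow> nat \<Rightarrow> nat \<Rightarrow> 'a fps" where
  "F3 q t R n m = fps_const (ovbin q t (int n + int m - 2) (2 * int m - 2) * t)
          * fps_X ^ (2 * m - 1) * fps_const (q ^ (2 * m\<^sup>2 - m)) * R (m - 1)"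
definition wt :: "'a::field \<Rightarrow> 'a \<Rightarrow> nat \<Rightarrow> nat \<Rightarrow> 'a" where
  "wt q t n m = t * q ^ (2 * m\<^sup>2 - m) * (ovbin q t (int n + int m - 2) (2 * int m - 2) - ovbin q t (int n + int m - 3) (2 * int m - 2))
     + q ^ (2 * m\<^sup>2 - 2 * m + n) * (ovbin q t (int n + int m - 2) (2 * int m - 2) + t * ovbin q t (int n + int m - 3) (2 * int m - 2))"
definition Vt :: "'a::field \<Rightarrow> 'a \<Rightarrow> (nat \<Rightarrow> 'a fps) \<Rightarrow> nat \<Rightarrow> nat \<Rightarrow> 'a fps" where
  "Vt q t R n m = fps_const (wt q t n m) * fps_X ^ (2 * m - 1) * R (m - 1)"

lemma brec:
  fixes q t :: "'a::comm_ring_1"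
  assumes "1 \<le> a" "0 \<le> b"
  shows "ovbin q t a b - ovbin q t (a-1) (b-1) = q ^ nat b * (ovbin q t (a-1) b + t * ovbin q t (a-2) (b-1))"
  using brec0[of "nat a" a b q t] assms by simp

lemma perm:
  fixes q t :: "'a::field" and R :: "nat \<Rightarrow> 'a fps"
  assumes Rrel: "\<And>j. (1 - fps_const (q ^ Suc j) * fps_X) * R (Suc j) = (1 + fps_const (t * q ^ Suc j) * fps_X) * R j"
  and nk: "n = Suc k" and m: "1 \<le> m" "m \<le> n"
  shows "(1 - fps_const (q^n) * fps_X) * (F1 q t R n m + F2 q t R n m + F3 q t R n m)
       - (1 + fps_const (t * q^n) * fps_X) * (F1 q t R k m + F2 q t R k m + F3 q t R k m)
       = Vt q t R n m - Vt q t R n (Suc m)"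
proof -
  obtain d where nd: "n = m + d" using m by (metis le_add_diff_inverse)
  obtain j where mj: "m = Suc j" using m by (cases m) auto
  let ?C = "fps_const :: 'a \<Rightarrow> 'a fps"
  let ?X = "fps_X :: 'a fps"
  let ?P = "ovbin q t"
  define a1v where "a1v = ?P (int n + int m - 1) (2 * int m)"
  define b'v where "b'v = ?P (int n + int m - 2) (2 * int m - 1)"
  define bv where "bv = ?P (int n + int m - 1) (2 * int m - 1)"
  define gv where "gv = ?P (int n + int m - 2) (2 * int m - 2)"
  define g'v where "g'v = ?P (int n + int m - 3) (2 * int m - 2)"
  define a1'v where "a1'v = ?P (int n + int m - 2) (2 * int m)"
  define a2'v where "a2'v = ?P (int n + int m - 3) (2 * int m - 1)"
  define hv where "hv = ?P (int n + int m - 4) (2 * int m - 2)"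
  have ik: "int k + int m - 1 = int n + int m - 2" "int k + int m - 2 = int n + int m - 3" using nk by simp_all
  have iS: "int n + int (Suc m) - 2 = int n + int m - 1" "int n + int (Suc m) - 3 = int n + int m - 2"
    "2 * int (Suc m) - 2 = 2 * int m" by simp_all
  have ex1: "2 * m\<^sup>2 + 2 * m = (2 * m\<^sup>2 - 2 * m) + m * 4" using mj by (simp add: power2_eq_square)
  have ex2: "2 * m\<^sup>2 - m = (2 * m\<^sup>2 - 2 * m) + m" using mj by (simp add: power2_eq_square)
  have ex3: "2 * m\<^sup>2 - 2 * m + n = (2 * m\<^sup>2 - 2 * m) + m + d" using nd by simp
  have ex4: "2 * (Suc m)\<^sup>2 - Suc m = (2 * m\<^sup>2 - 2 * m) + m * 5 + 1" using mj by (simp add: power2_eq_square)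
  have ex5: "2 * (Suc m)\<^sup>2 - 2 * Suc m + n = (2 * m\<^sup>2 - 2 * m) + m * 5 + d" using mj nd by (simp add: power2_eq_square)
  have ex6: "2 * Suc m - 1 = Suc (Suc (2 * m - 1))" "2 * m = Suc (2 * m - 1)" using mj by simp_all
  have rel: "(1 - ?C (q^m) * ?X) * R m = (1 + ?C t * ?C (q^m) * ?X) * R (m - 1)"
    using Rrel[of j] mj by simp
  have Gq0: "q ^ (2*m - 1) * q = (q^m)^2"
  proof -
    have "q ^ (2*m - 1) * q = q ^ Suc (2*m - 1)" by (simp add: algebra_simps)
    also have "Suc (2*m - 1) = m * 2" using mj by simp
    finally show ?thesis by (simp add: power_mult)
  qed
  have Gq: "?C (q ^ (2*m - 1)) * ?C q = ?C (q^m) ^ 2"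
    using Gq0 by simp
  have xx: "?X ^ (2*m-1) * ?X = ?X ^ (2*m)" using ex6(2) by (metis power_Suc2)
  have F1e: "F1 q t R n m = (?C a1v + ?C t * ?C b'v) * (?X ^ (2*m-1) * ?X) * (?C (q ^ (2 * m\<^sup>2 - 2 * m)) * ?C (q^m) ^ 4) * R m"
    unfolding F1_def a1v_def b'v_def ex1 xx by (simp add: power_add power_mult)
  have F2e: "F2 q t R n m = ?C bv * ?X ^ (2*m-1) * (?C (q ^ (2 * m\<^sup>2 - 2 * m)) * ?C (q^m)) * R m"
    unfolding F2_def bv_def ex2 by (simp add: power_add)
  have F3e: "F3 q t R n m = (?C gv * ?C t) * ?X ^ (2*m-1) * (?C (q ^ (2 * m\<^sup>2 - 2 * m)) * ?C (q^m)) * R (m - 1)"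
    unfolding F3_def gv_def ex2 by (simp add: power_add)
  have F1'e: "F1 q t R k m = (?C a1'v + ?C t * ?C a2'v) * (?X ^ (2*m-1) * ?X) * (?C (q ^ (2 * m\<^sup>2 - 2 * m)) * ?C (q^m) ^ 4) * R m"
    unfolding F1_def a1'v_def a2'v_def ex1 ik xx by (simp add: power_add power_mult)
  have F2'e: "F2 q t R k m = ?C b'v * ?X ^ (2*m-1) * (?C (q ^ (2 * m\<^sup>2 - 2 * m)) * ?C (q^m)) * R m"
    unfolding F2_def b'v_def ex2 ik by (simp add: power_add)
  have F3'e: "F3 q t R k m = (?C g'v * ?C t) * ?X ^ (2*m-1) * (?C (q ^ (2 * m\<^sup>2 - 2 * m)) * ?C (q^m)) * R (m - 1)"
    unfolding F3_def g'v_def ex2 ik by (simp add: power_add)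
  have Qn: "?C (q^n) = ?C (q^m) * ?C (q^d)" using nd by (simp add: power_add)
  have Tn: "?C (t * q^n) = ?C t * ?C (q^m) * ?C (q^d)" using nd by (simp add: power_add mult.assoc)
  have V1: "Vt q t R n m = (?C t * ?C (q ^ (2 * m\<^sup>2 - 2 * m)) * ?C (q^m) * (?C gv - ?C g'v)
       + ?C (q ^ (2 * m\<^sup>2 - 2 * m)) * ?C (q^m) * ?C (q^d) * (?C gv + ?C t * ?C g'v)) * ?X ^ (2*m-1) * R (m - 1)"
    unfolding Vt_def wt_def gv_def g'v_def ex2 ex3 by (simp add: power_add algebra_simps)
  have V2: "Vt q t R n (Suc m) = (?C t * ?C (q ^ (2 * m\<^sup>2 - 2 * m)) * ?C (q^m) ^ 5 * ?C q * (?C a1v - ?C a1'v)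
       + ?C (q ^ (2 * m\<^sup>2 - 2 * m)) * ?C (q^m) ^ 5 * ?C (q^d) * (?C a1v + ?C t * ?C a1'v)) * (?X ^ (2*m-1) * ?X * ?X) * R m"
  proof -
    have "?X ^ (2 * Suc m - 1) = ?X ^ (2*m-1) * ?X * ?X" unfolding ex6(1) by (simp add: algebra_simps)
    then show ?thesis
      unfolding Vt_def wt_def a1v_def a1'v_def ex4 ex5 iS by (simp add: power_add power_mult algebra_simps)
  qed
  have ie: "int n + int m - 1 - 1 = int n + int m - 2" "2 * int m - 1 - 1 = 2 * int m - 2"
    "int n + int m - 1 - 2 = int n + int m - 3" "int n + int m - 2 - 1 = int n + int m - 3"
    "int n + int m - 2 - 2 = int n + int m - 4" by simp_all
  have nat1: "nat (int n + int m - 1 - (2 * int m - 1)) = d" "nat (2 * int m - 1) = 2 * m - 1"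
    using nd mj by simp_all
  have R1v: "bv - b'v = q ^ d * (gv + t * g'v)"
    using arec[of "2 * int m - 1" "int n + int m - 1" q t] nd mj
    unfolding ie nat1 bv_def b'v_def gv_def g'v_def by simp
  have R2v: "bv - gv = q ^ (2 * m - 1) * (b'v + t * g'v)"
    using brec[of "int n + int m - 1" "2 * int m - 1" q t] nd mj
    unfolding ie nat1 bv_def b'v_def gv_def g'v_def by simp
  have R1: "?C bv - ?C b'v = ?C (q ^ d) * (?C gv + ?C t * ?C g'v)" by (simp add: R1v)
  have R2: "?C bv - ?C gv = ?C (q ^ (2 * m - 1)) * (?C b'v + ?C t * ?C g'v)" by (simp add: R2v)
  show ?thesis
  proof (cases d)
    case 0
    have Z: "a1v = 0" "a1'v = 0" "b'v = 0" "a2'v = 0" "g'v = 0" "bv = 1" "gv = 1"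
      unfolding a1v_def a1'v_def b'v_def a2'v_def g'v_def bv_def gv_def using nd 0 mj
      by (simp_all add: ovbin_out ovbin_diag)
    have Z': "?C a1v = 0" "?C a1'v = 0" "?C b'v = 0" "?C a2'v = 0" "?C g'v = 0" "?C bv = 1" "?C gv = 1" "?C (q^d) = 1"
      using Z 0 by simp_all
    show ?thesis
      by (rule gen0'[OF rel Z' F1e F2e F3e F1'e F2'e F3'e Qn Tn V1 V2])
  next
    case (Suc d1)
    have ie2: "nat (int n + int m - 1 - 2 * int m) = d1" "nat (int n + int m - 2 - (2 * int m - 1)) = d1"
      "2 * int m - 1 - 1 = 2 * int m - 2" using nd Suc by simp_all
    have R3v: "b'v - g'v = q ^ (2 * m - 1) * (a2'v + t * hv)"
      using brec[of "int n + int m - 2" "2 * int m - 1" q t] nd mj Suc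
      unfolding ie nat1 b'v_def g'v_def a2'v_def hv_def by simp
    have R4v: "a1v - a1'v = q ^ d1 * (b'v + t * a2'v)"
      using arec[of "2 * int m" "int n + int m - 1" q t] nd mj Suc
      unfolding ie ie2 a1v_def a1'v_def b'v_def a2'v_def by simp
    have R5v: "b'v - a2'v = q ^ d1 * (g'v + t * hv)"
      using arec[of "2 * int m - 1" "int n + int m - 2" q t] nd mj Suc
      unfolding ie ie2 b'v_def a2'v_def g'v_def hv_def by simp
    have R3: "?C b'v - ?C g'v = ?C (q ^ (2 * m - 1)) * (?C a2'v + ?C t * ?C hv)" by (simp add: R3v)
    have R4: "?C a1v - ?C a1'v = ?C (q ^ d1) * (?C b'v + ?C t * ?C a2'v)" by (simp add: R4v)
    have R5: "?C b'v - ?C a2'v = ?C (q ^ d1) * (?C g'v + ?C t * ?C hv)" by (simp add: R5v)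
    have DD: "?C (q ^ d) = ?C q * ?C (q ^ d1)" using Suc by simp
    show ?thesis
      by (rule gen1'[OF rel Gq R1 R2 R3 DD R4 R5 F1e F2e F3e F1'e F2'e F3'e Qn Tn V1 V2])
  qed
qed

lemma F1_zero: "n \<le> m \<Longrightarrow> F1 q t R n m = 0"
  unfolding F1_def by (simp add: ovbin_out)
lemma F2_zero: "n < m \<Longrightarrow> F2 q t R n m = 0"
  unfolding F2_def by (simp add: ovbin_out)
lemma F3_zero: "n < m \<Longrightarrow> F3 q t R n m = 0"
  unfolding F3_def by (simp add: ovbin_out)

lemma sum_tele: "(\<Sum>m = 1..n. (f m - f (Suc m) :: 'b::ab_group_add)) = f 1 - f (Suc n)"
  by (induction n) (simp_all add: sum.cl_ivl_Suc)

lemma mainlem: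
  fixes q t :: "'a::field" and R :: "nat \<Rightarrow> 'a fps"
  assumes Rrel: "\<And>j. (1 - fps_const (q ^ Suc j) * fps_X) * R (Suc j) = (1 + fps_const (t * q ^ Suc j) * fps_X) * R j"
  and R0: "R 0 = 1"
  shows "R n = 1 + (\<Sum>m = 1..n - 1. F1 q t R n m) + (\<Sum>m = 1..n. F2 q t R n m) + (\<Sum>m = 1..n. F3 q t R n m)"
proof (induction n)
  case 0
  then show ?case using R0 by simp
next
  case (Suc k)
  define n where "n = Suc k"
  let ?C = "fps_const :: 'a \<Rightarrow> 'a fps"
  let ?X = "fps_X :: 'a fps"
  let ?G = "\<lambda>n m. F1 q t R n m + F2 q t R n m + F3 q t R n m"
  have An: "1 + (\<Sum>m = 1..n - 1. F1 q t R n m) + (\<Sum>m = 1..n. F2 q t R n m) + (\<Sum>m = 1..n. F3 q t R n m)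
      = 1 + (\<Sum>m = 1..n. ?G n m)"
  proof -
    have "(\<Sum>m = 1..n. F1 q t R n m) = (\<Sum>m = 1..n - 1. F1 q t R n m)"
      unfolding n_def by (simp add: sum.cl_ivl_Suc F1_zero)
    then show ?thesis by (simp add: sum.distrib)
  qed
  have Ak: "1 + (\<Sum>m = 1..k - 1. F1 q t R k m) + (\<Sum>m = 1..k. F2 q t R k m) + (\<Sum>m = 1..k. F3 q t R k m)
      = 1 + (\<Sum>m = 1..n. ?G k m)"
  proof -
    have "(\<Sum>m = 1..k - 1. F1 q t R k m) = (\<Sum>m = 1..n. F1 q t R k m)"
      by (rule sum.mono_neutral_left) (auto simp: n_def F1_zero)
    moreover have "(\<Sum>m = 1..k. F2 q t R k m) = (\<Sum>m = 1..n. F2 q t R k m)"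
      unfolding n_def by (simp add: sum.cl_ivl_Suc F2_zero)
    moreover have "(\<Sum>m = 1..k. F3 q t R k m) = (\<Sum>m = 1..n. F3 q t R k m)"
      unfolding n_def by (simp add: sum.cl_ivl_Suc F3_zero)
    ultimately show ?thesis by (simp add: sum.distrib)
  qed
  have key: "(1 - ?C (q^n) * ?X) * (1 + (\<Sum>m = 1..n. ?G n m)) - (1 + ?C (t * q^n) * ?X) * (1 + (\<Sum>m = 1..n. ?G k m)) = 0"
  proof -
    have "(1 - ?C (q^n) * ?X) * (1 + (\<Sum>m = 1..n. ?G n m)) - (1 + ?C (t * q^n) * ?X) * (1 + (\<Sum>m = 1..n. ?G k m))
       = - (?C (q^n) + ?C (t * q^n)) * ?X + (\<Sum>m = 1..n. (1 - ?C (q^n) * ?X) * ?G n m - (1 + ?C (t * q^n) * ?X) * ?G k m)"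
    proof -
      have r: "(1 - a) * (1 + S1) - (1 + b) * (1 + S2) = - (a + b) + ((1 - a) * S1 - (1 + b) * S2)"
        for a b S1 S2 :: "'a fps" by (simp add: algebra_simps)
      have s: "(1 - ?C (q^n) * ?X) * (\<Sum>m = 1..n. ?G n m) - (1 + ?C (t * q^n) * ?X) * (\<Sum>m = 1..n. ?G k m)
          = (\<Sum>m = 1..n. (1 - ?C (q^n) * ?X) * ?G n m - (1 + ?C (t * q^n) * ?X) * ?G k m)"
        by (simp only: sum_distrib_left sum_subtractf)
      show ?thesis unfolding r s by (simp only: mult_minus_left distrib_right)
    qed
    also have "(\<Sum>m = 1..n. (1 - ?C (q^n) * ?X) * ?G n m - (1 + ?C (t * q^n) * ?X) * ?G k m)
        = (\<Sum>m = 1..n. Vt q t R n m - Vt q t R n (Suc m))"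
      by (rule sum.cong[OF refl], rule perm[OF Rrel]) (auto simp: n_def)
    also have "\<dots> = Vt q t R n 1 - Vt q t R n (Suc n)" by (rule sum_tele)
    also have "Vt q t R n (Suc n) = 0"
    proof -
      have "wt q t n (Suc n) = 0" unfolding wt_def by (simp add: ovbin_out)
      then show ?thesis unfolding Vt_def by simp
    qed
    also have "Vt q t R n 1 = (?C (q^n) + ?C (t * q^n)) * ?X"
    proof -
      have "wt q t n 1 = q^n + t * q^n"
      proof (cases k)
        case 0 then show ?thesis unfolding wt_def n_def by (simp add: ovbin_out ovbin_0)
      next
        case (Suc k') then show ?thesis unfolding wt_def n_def by (simp add: ovbin_out ovbin_0 algebra_simps)
      qed
      then show ?thesis unfolding Vt_def using R0 by simp
    qed
    finally show ?thesis by (simp only: diff_zero mult_minus_left add.left_inverse)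
  qed
  have "(1 - ?C (q^n) * ?X) * R n = (1 - ?C (q^n) * ?X) * (1 + (\<Sum>m = 1..n. ?G n m))"
  proof -
    have "(1 - ?C (q^n) * ?X) * R n = (1 + ?C (t * q^n) * ?X) * R k" unfolding n_def by (rule Rrel)
    also have "\<dots> = (1 + ?C (t * q^n) * ?X) * (1 + (\<Sum>m = 1..n. ?G k m))" using Suc.IH Ak by simp
    also have "\<dots> = (1 - ?C (q^n) * ?X) * (1 + (\<Sum>m = 1..n. ?G n m))" using key by simp
    finally show ?thesis .
  qed
  moreover have "(1 - ?C (q^n) * ?X) \<noteq> 0"
  proof
    assume "(1 - ?C (q^n) * ?X) = 0"
    then have "fps_nth (1 - ?C (q^n) * ?X) 0 = 0" by simp
    then show False by simp
  qed
  ultimately have "R n = 1 + (\<Sum>m = 1..n. ?G n m)" by simp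
  then show ?case using An unfolding n_def by simp
qed
theorem theorem4p3:
  fixes q t :: "'a::field" and n :: nat
  assumes "n \<ge> 1"
  defines "R \<equiv> (\<lambda>k::nat. qpoch (- fps_const (t * q) * fps_X) (fps_const q) k
                         / qpoch (fps_const q * fps_X) (fps_const q) k)"
  shows "R n =
     1
     + (\<Sum>m = 1..n - 1.
          fps_const (ovbin q t (int n + int m - 1) (2 * int m)
                     + t * ovbin q t (int n + int m - 2) (2 * int m - 1))
          * fps_X ^ (2 * m) * fps_const (q ^ (2 * m\<^sup>2 + 2 * m)) * R m)
     + (\<Sum>m = 1..n.
          fps_const (ovbin q t (int n + int m - 1) (2 * int m - 1))
          * fps_X ^ (2 * m - 1) * fps_const (q ^ (2 * m\<^sup>2 - m)) * R m)
     + (\<Sum>m = 1..n.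
          fps_const (ovbin q t (int n + int m - 2) (2 * int m - 2) * t)
          * fps_X ^ (2 * m - 1) * fps_const (q ^ (2 * m\<^sup>2 - m)) * R (m - 1))"
  proof -
  have Rrel: "\<And>j. (1 - fps_const (q ^ Suc j) * fps_X) * R (Suc j) = (1 + fps_const (t * q ^ Suc j) * fps_X) * R j"
    unfolding R_def using R_step by simp
  have R0: "R 0 = 1" unfolding R_def using R_zero by simp
  show ?thesis using mainlem[OF Rrel R0, of n] unfolding F1_def F2_def F3_def .
qed

end
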